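(* Let $S,S'\subset\mathbb{R}^n$ be finite sets and $h\colon S\to\mathbb{R}^n$, $h'\colon S'\to\mathbb{R}^n$ maps, with $\mathbb{R}$-persistence modules of the sampled maps $M^h$, $M^{h'}$. Then $$d_I(M^h,M^{h'})\le d_H(\operatorname{Gr}(h),\operatorname{Gr}(h')),$$ where $d_H$ is the Hausdorff distance induced by the metric $d_{\mathbb{R}^n\times\mathbb{R}^n}$.
   Context: Fix a field $K$; $H$ is homology (in a fixed degree) with coefficients in $K$. On $\mathbb{R}^n$ use the Euclidean metric $d_{\mathbb{R}^n}$; on $\mathbb{R}^n\times\mathbb{R}^n$ use $d_{\mathbb{R}^n\times\mathbb{R}^n}((x_1,y_1),(x_2,y_2))=\max\{d_{\mathbb{R}^n}(x_1,x_2),d_{\mathbb{R}^n}(y_1,y_2)\}$. For a subset $U$ of either space and $r\ge0$, $U_r:=\{z:\inf_{u\in U}d(z,u)\le r\}$. For $h\colon U\to\mathbb{R}^n$, $\operatorname{Gr}(h)=\{(u,h(u)):u\in U\}$. For each $r\ge0$ the projections give a diagram $U_r\leftarrow\operatorname{Gr}(h)_r\rightarrow h(U)_r$, and applying $H$ gives a representation $V_r=(HU_r\leftarrow H\operatorname{Gr}(h)_r\rightarrow Hh(U)_r)$ of the quiver $1\leftarrow2\rightarrow3$; for $s\le r$ the inclusions induce a morphism $V_s\to V_r$. (All spaces are finite dimensional when $U$ is finite.) Interval representations $\mathbb{I}[b,d]$ ($1\le b\le d\le 3$) have $K$ at vertices $b,\dots,d$, $0$ elsewhere, identity maps between copies of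 $K$ and zero otherwise. Choose for each $r$ an isomorphism $\eta_r\colon V_r\to\bigoplus_{b\le d}\mathbb{I}[b,d]^{m^r_{b,d}}$, and for $s\le r$ let $\phi(s,r):=\pi_r\circ\eta_r\circ(V_s\to V_r)\circ\eta_s^{-1}\circ\iota_s\colon\mathbb{I}[1,3]^{m^s_{1,3}}\to\mathbb{I}[1,3]^{m^r_{1,3}}$, with $\iota_s$ the inclusion of the summand $\mathbb{I}[1,3]^{m^s_{1,3}}$ and $\pi_r$ the projection onto $\mathbb{I}[1,3]^{m^r_{1,3}}$. Since such a morphism has the same linear map at all three vertices, it is identified with a linear map $K^{m^s_{1,3}}\to K^{m^r_{1,3}}$. The $\mathbb{R}$-persistence module of $h$, $M^h$, is $r\mapsto K^{m^r_{1,3}}$ ($0$ for $r<0$) with these transition maps; it is well defined up to isomorphism. An $\mathbb{R}$-persistence module $M$ is a functor from the poset $(\mathbb{R},\le)$ to finite-dimensional $K$-vector spaces, with transition maps $\varphi_M(s,t)$; $M(\delta)_t:=M_{t+\delta}$; $\varphi_M(\delta)\colon M\to M(\delta)$ has components $\varphi_M(t,t+\delta)$. $M,N$ are $\delta$-interleaved if there are morphisms $f\colon M\to N(\delta)$, $g\colon N\to M(\delta)$ with $g(\delta)\circ f=\varphi_M(2\delta)$ and $f(\delta)\circ g=\varphi_N(2\delta)$; $d_I(M,N)$ is the infimum of such $\delta\ge0$. *)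

theory Defs
  imports "HOL-Homology.Homology" "HOL-Analysis.Analysis"
begin

text \<open>Singular p-chains with coefficients in a field 'k: finitely supported
  'k-valued functions on singular simplices (HOL-Homology's simplices).\<close>

type_synonym ('a,'k) kchain = "((nat \<Rightarrow> real) \<Rightarrow> 'a) \<Rightarrow> 'k"

definition kzero :: "('a,'k::field) kchain" where
  "kzero = (\<lambda>_. 0)"

definition is_kchain :: "nat \<Rightarrow> 'a topology \<Rightarrow> ('a,'k::field) kchain \<Rightarrow> bool" where
  "is_kchain p X c \<longleftrightarrow> finite {f. c f \<noteq> 0} \<and> (\<forall>f. c f \<noteq> 0 \<longrightarrow> singular_simplex p X f)"

definition kboundary :: "nat \<Rightarrow> ('a,'k::field) kchain \<Rightarrow> ('a,'k) kchain" where
  "kboundary p c = (\<lambda>g. if p = 0 then 0 else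
      (\<Sum>f\<in>{f. c f \<noteq> 0}. \<Sum>k\<le>p. if singular_face p k f = g then (- 1) ^ k * c f else 0))"

definition is_kcycle :: "nat \<Rightarrow> 'a topology \<Rightarrow> ('a,'k::field) kchain \<Rightarrow> bool" where
  "is_kcycle p X c \<longleftrightarrow> is_kchain p X c \<and> kboundary p c = kzero"

definition is_kbdry :: "nat \<Rightarrow> 'a topology \<Rightarrow> ('a,'k::field) kchain \<Rightarrow> bool" where
  "is_kbdry p X c \<longleftrightarrow> (\<exists>d. is_kchain (Suc p) X d \<and> kboundary (Suc p) d = c)"

definition khomologous :: "nat \<Rightarrow> 'a topology \<Rightarrow> ('a,'k::field) kchain \<Rightarrow> ('a,'k) kchain \<Rightarrow> bool" where
  "khomologous p X c c' \<longleftrightarrow> is_kbdry p X (\<lambda>f. c f - c' f)"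

definition kpush :: "nat \<Rightarrow> ('a \<Rightarrow> 'b) \<Rightarrow> ('a,'k::field) kchain \<Rightarrow> ('b,'k) kchain" where
  "kpush p g c = (\<lambda>f'. \<Sum>f\<in>{f. c f \<noteq> 0 \<and> simplex_map p g f = f'}. c f)"

definition klincomb :: "'i set \<Rightarrow> ('i \<Rightarrow> 'k::field) \<Rightarrow> ('i \<Rightarrow> ('a,'k) kchain) \<Rightarrow> ('a,'k) kchain" where
  "klincomb I a v = (\<lambda>f. \<Sum>i\<in>I. a i * v i f)"

definition hbasis :: "nat \<Rightarrow> 'a topology \<Rightarrow> 'i set \<Rightarrow> ('i \<Rightarrow> ('a,'k::field) kchain) \<Rightarrow> bool" where
  "hbasis p X I v \<longleftrightarrow> finite I \<and> (\<forall>i\<in>I. is_kcycle p X (v i))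
     \<and> (\<forall>c. is_kcycle p X c \<longrightarrow> (\<exists>a. khomologous p X c (klincomb I a v)))
     \<and> (\<forall>a. khomologous p X (klincomb I a v) kzero \<longrightarrow> (\<forall>i\<in>I. a i = 0))"

definition hcoord :: "nat \<Rightarrow> 'a topology \<Rightarrow> 'i set \<Rightarrow> ('i \<Rightarrow> ('a,'k::field) kchain) \<Rightarrow> ('a,'k) kchain \<Rightarrow> 'i \<Rightarrow> 'k" where
  "hcoord p X I v c = (THE a. (\<forall>i. i \<notin> I \<longrightarrow> a i = 0) \<and> khomologous p X c (klincomb I a v))"

definition thickE :: "('a::metric_space) set \<Rightarrow> real \<Rightarrow> 'a set" where
  "thickE U r = {z. \<exists>u\<in>U. dist z u \<le> r}"

definition dmax :: "('a::metric_space \<times> 'a) \<Rightarrow> ('a \<times> 'a) \<Rightarrow> real" where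
  "dmax z w = max (dist (fst z) (fst w)) (dist (snd z) (snd w))"

definition thickM :: "('a::metric_space \<times> 'a) set \<Rightarrow> real \<Rightarrow> ('a \<times> 'a) set" where
  "thickM U r = {z. \<exists>u\<in>U. dmax z u \<le> r}"

definition Gr :: "'a set \<Rightarrow> ('a \<Rightarrow> 'b) \<Rightarrow> ('a \<times> 'b) set" where
  "Gr U h = {(u, h u) | u. u \<in> U}"

definition hausdorff_dmax :: "('a::metric_space \<times> 'a) set \<Rightarrow> ('a \<times> 'a) set \<Rightarrow> ereal" where
  "hausdorff_dmax A B = (if A = {} \<and> B = {} then 0 else
     max (SUP a\<in>A. INF b\<in>B. ereal (dmax a b)) (SUP b\<in>B. INF a\<in>A. ereal (dmax a b)))"

definition intervals3 :: "(nat \<times> nat) set" where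
  "intervals3 = {(b, d). 1 \<le> b \<and> b \<le> d \<and> d \<le> 3}"

text \<open>Indices of the summands I[b,d] (copy j) that are nonzero at vertex v.\<close>
definition vidx :: "nat \<Rightarrow> (nat \<times> nat \<Rightarrow> nat) \<Rightarrow> ((nat \<times> nat) \<times> nat) set" where
  "vidx v m = {((b, d), j). (b, d) \<in> intervals3 \<and> b \<le> v \<and> v \<le> d \<and> j < m (b, d)}"

text \<open>An isomorphism eta from H_p(X1) <-f- H_p(X2) -g-> H_p(X3) onto the direct sum of
  interval modules I[b,d]^(m(b,d)), given by the images under eta^-1 of the standard
  generators: e1, e2, e3 (cycle representatives) at vertices 1, 2, 3.\<close>
definition is_interval_decomp ::
  "nat \<Rightarrow> 'a topology \<Rightarrow> 'b topology \<Rightarrow> 'c topology \<Rightarrow> ('b \<Rightarrow> 'a) \<Rightarrow> ('b \<Rightarrow> 'c)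
   \<Rightarrow> (nat \<times> nat \<Rightarrow> nat) \<Rightarrow> ((nat \<times> nat) \<times> nat \<Rightarrow> ('a,'k::field) kchain)
   \<Rightarrow> ((nat \<times> nat) \<times> nat \<Rightarrow> ('b,'k) kchain) \<Rightarrow> ((nat \<times> nat) \<times> nat \<Rightarrow> ('c,'k) kchain) \<Rightarrow> bool" where
  "is_interval_decomp p X1 X2 X3 f g m e1 e2 e3 \<longleftrightarrow>
     hbasis p X1 (vidx 1 m) e1 \<and> hbasis p X2 (vidx 2 m) e2 \<and> hbasis p X3 (vidx 3 m) e3 \<and>
     (\<forall>b d j. ((b, d), j) \<in> vidx 2 m \<longrightarrow>
        khomologous p X1 (kpush p f (e2 ((b, d), j))) (if b = 1 then e1 ((b, d), j) else kzero) \<and>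
        khomologous p X3 (kpush p g (e2 ((b, d), j))) (if d = 3 then e3 ((b, d), j) else kzero))"

definition dom_sp :: "('a::metric_space) set \<Rightarrow> real \<Rightarrow> 'a topology" where
  "dom_sp S r = top_of_set (thickE S r)"

definition gr_sp :: "('a::metric_space) set \<Rightarrow> ('a \<Rightarrow> 'a) \<Rightarrow> real \<Rightarrow> ('a \<times> 'a) topology" where
  "gr_sp S h r = top_of_set (thickM (Gr S h) r)"

definition im_sp :: "('a::metric_space) set \<Rightarrow> ('a \<Rightarrow> 'a) \<Rightarrow> real \<Rightarrow> 'a topology" where
  "im_sp S h r = top_of_set (thickE (h ` S) r)"

definition is_decomp_family ::
  "nat \<Rightarrow> ('a::metric_space) set \<Rightarrow> ('a \<Rightarrow> 'a) \<Rightarrow> (real \<Rightarrow> nat \<times> nat \<Rightarrow> nat)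
   \<Rightarrow> (real \<Rightarrow> (nat \<times> nat) \<times> nat \<Rightarrow> ('a,'k::field) kchain)
   \<Rightarrow> (real \<Rightarrow> (nat \<times> nat) \<times> nat \<Rightarrow> ('a \<times> 'a,'k) kchain)
   \<Rightarrow> (real \<Rightarrow> (nat \<times> nat) \<times> nat \<Rightarrow> ('a,'k) kchain) \<Rightarrow> bool" where
  "is_decomp_family p S h m e1 e2 e3 \<longleftrightarrow>
     (\<forall>r\<ge>0. is_interval_decomp p (dom_sp S r) (gr_sp S h r) (im_sp S h r) fst snd
               (m r) (e1 r) (e2 r) (e3 r))"

text \<open>Persistence modules with M_r = K^(dim r); transition maps as matrices (rows i, columns j).\<close>
definition pm_dim :: "(real \<Rightarrow> nat \<times> nat \<Rightarrow> nat) \<Rightarrow> real \<Rightarrow> nat" where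
  "pm_dim m r = (if r < 0 then 0 else m r (1, 3))"

text \<open>phi(s,r) = pi_r o eta_r o (V_s -> V_r) o eta_s^-1 o iota_s, read off at vertex 2.\<close>
definition pm_tr :: "nat \<Rightarrow> ('a::metric_space) set \<Rightarrow> ('a \<Rightarrow> 'a) \<Rightarrow> (real \<Rightarrow> nat \<times> nat \<Rightarrow> nat)
   \<Rightarrow> (real \<Rightarrow> (nat \<times> nat) \<times> nat \<Rightarrow> ('a \<times> 'a,'k::field) kchain)
   \<Rightarrow> real \<Rightarrow> real \<Rightarrow> nat \<Rightarrow> nat \<Rightarrow> 'k" where
  "pm_tr p S h m e2 s r i j = (if 0 \<le> s \<and> s \<le> r then
      hcoord p (gr_sp S h r) (vidx 2 (m r)) (e2 r) (e2 s ((1, 3), j)) ((1, 3), i) else 0)"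

text \<open>F : M -> N(delta), components F t : M_t -> N_(t+delta), natural in t.\<close>
definition pm_morph :: "(real \<Rightarrow> nat) \<Rightarrow> (real \<Rightarrow> real \<Rightarrow> nat \<Rightarrow> nat \<Rightarrow> 'k::field)
   \<Rightarrow> (real \<Rightarrow> nat) \<Rightarrow> (real \<Rightarrow> real \<Rightarrow> nat \<Rightarrow> nat \<Rightarrow> 'k) \<Rightarrow> real
   \<Rightarrow> (real \<Rightarrow> nat \<Rightarrow> nat \<Rightarrow> 'k) \<Rightarrow> bool" where
  "pm_morph dM tM dN tN \<delta> F \<longleftrightarrow>
     (\<forall>s t. s \<le> t \<longrightarrow> (\<forall>i<dN (t + \<delta>). \<forall>j<dM s.
        (\<Sum>k<dM t. F t i k * tM s t k j) = (\<Sum>k<dN (s + \<delta>). tN (s + \<delta>) (t + \<delta>) i k * F s k j)))"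

definition pm_interleaved :: "(real \<Rightarrow> nat) \<Rightarrow> (real \<Rightarrow> real \<Rightarrow> nat \<Rightarrow> nat \<Rightarrow> 'k::field)
   \<Rightarrow> (real \<Rightarrow> nat) \<Rightarrow> (real \<Rightarrow> real \<Rightarrow> nat \<Rightarrow> nat \<Rightarrow> 'k) \<Rightarrow> real \<Rightarrow> bool" where
  "pm_interleaved dM tM dN tN \<delta> \<longleftrightarrow> (\<exists>F G.
     pm_morph dM tM dN tN \<delta> F \<and> pm_morph dN tN dM tM \<delta> G \<and>
     (\<forall>t. \<forall>i<dM (t + 2 * \<delta>). \<forall>j<dM t.
        (\<Sum>k<dN (t + \<delta>). G (t + \<delta>) i k * F t k j) = tM t (t + 2 * \<delta>) i j) \<and>
     (\<forall>t. \<forall>i<dN (t + 2 * \<delta>). \<forall>j<dN t.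
        (\<Sum>k<dM (t + \<delta>). F (t + \<delta>) i k * G t k j) = tN t (t + 2 * \<delta>) i j))"

definition interleaving_dist :: "(real \<Rightarrow> nat) \<Rightarrow> (real \<Rightarrow> real \<Rightarrow> nat \<Rightarrow> nat \<Rightarrow> 'k::field)
   \<Rightarrow> (real \<Rightarrow> nat) \<Rightarrow> (real \<Rightarrow> real \<Rightarrow> nat \<Rightarrow> nat \<Rightarrow> 'k) \<Rightarrow> ereal" where
  "interleaving_dist dM tM dN tN = Inf {ereal \<delta> | \<delta>. \<delta> \<ge> 0 \<and> pm_interleaved dM tM dN tN \<delta>}"

end

theory Submission
  imports Defs
begin


lemma kboundary_on:
  assumes "finite F" "{f. c f \<noteq> 0} \<subseteq> F"
  shows "kboundary p c g = (if p = 0 then 0 else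
      (\<Sum>f\<in>F. \<Sum>k\<le>p. if singular_face p k f = g then (- 1) ^ k * c f else 0))"
proof -
  have "\<And>f. c f = 0 \<Longrightarrow> (\<Sum>k\<le>p. if singular_face p k f = g then (- 1) ^ k * c f else 0) = 0"
    by (intro sum.neutral ballI) simp
  then show ?thesis unfolding kboundary_def
    using assms by (auto intro!: sum.mono_neutral_left)
qed

lemma kpush_on:
  assumes "finite F" "{f. c f \<noteq> 0} \<subseteq> F"
  shows "kpush p g c f' = (\<Sum>f\<in>F. if simplex_map p g f = f' then c f else 0)"
proof -
  have "kpush p g c f' = (\<Sum>f\<in>{f. c f \<noteq> 0}. if simplex_map p g f = f' then c f else 0)"
    unfolding kpush_def using assms by (intro sum.mono_neutral_cong_left) (auto intro: finite_subset)
  also have "\<dots> = (\<Sum>f\<in>F. if simplex_map p g f = f' then c f else 0)"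
    using assms by (intro sum.mono_neutral_left) auto
  finally show ?thesis .
qed

lemma kchain_fin: "is_kchain p X c \<Longrightarrow> finite {f. c f \<noteq> 0}"
  by (simp add: is_kchain_def)

lemma kchain_zero: "is_kchain p X kzero"
  by (simp add: is_kchain_def kzero_def)

lemma kchain_add:
  assumes "is_kchain p X c" "is_kchain p X d"
  shows "is_kchain p X (\<lambda>f. c f + d f)"
proof -
  have "{f. c f + d f \<noteq> 0} \<subseteq> {f. c f \<noteq> 0} \<union> {f. d f \<noteq> 0}" by auto
  then show ?thesis using assms unfolding is_kchain_def
    by (metis (mono_tags, lifting) add.right_neutral add_0 finite_Un finite_subset)
qed

lemma kchain_smult:
  assumes "is_kchain p X c"
  shows "is_kchain p X (\<lambda>f. a * c f)"
proof -
  have "{f. a * c f \<noteq> 0} \<subseteq> {f. c f \<noteq> 0}" by auto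
  then show ?thesis using assms unfolding is_kchain_def
    by (metis (mono_tags, lifting) finite_subset mult_zero_right)
qed

lemma kchain_diff:
  assumes "is_kchain p X c" "is_kchain p X d"
  shows "is_kchain p X (\<lambda>f. c f - d f)"
  using kchain_add[OF assms(1) kchain_smult[OF assms(2), of "-1"]] by simp

lemma kchain_lincomb:
  assumes "finite I" "\<And>i. i \<in> I \<Longrightarrow> is_kchain p X (v i)"
  shows "is_kchain p X (klincomb I a v)"
  using assms
proof (induction I rule: finite_induct)
  case empty then show ?case by (simp add: klincomb_def kchain_zero[unfolded kzero_def])
next
  case (insert x F)
  have "klincomb (insert x F) a v = (\<lambda>f. a x * v x f + klincomb F a v f)"
    using insert by (auto simp: klincomb_def)
  then show ?case using insert by (auto intro!: kchain_add kchain_smult)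
qed

lemma kchain_mono:
  assumes "is_kchain p (top_of_set A) c" "A \<subseteq> B"
  shows "is_kchain p (top_of_set B) c"
  using assms singular_simplex_mono unfolding is_kchain_def by blast

lemma kboundary_add:
  assumes "is_kchain q X c" "is_kchain q X d"
  shows "kboundary q (\<lambda>f. c f + d f) = (\<lambda>g. kboundary q c g + kboundary q d g)"
proof
  fix g
  let ?F = "{f. c f \<noteq> 0} \<union> {f. d f \<noteq> 0}"
  have fin: "finite ?F" using assms by (simp add: is_kchain_def)
  show "kboundary q (\<lambda>f. c f + d f) g = kboundary q c g + kboundary q d g"
    apply (subst kboundary_on[OF fin], force)
    apply (subst kboundary_on[OF fin], force)
    apply (subst kboundary_on[OF fin], force)
    by (auto simp: sum.distrib[symmetric] distrib_left intro!: sum.cong)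
qed

lemma kboundary_smult:
  assumes "is_kchain q X c"
  shows "kboundary q (\<lambda>f. a * c f) = (\<lambda>g. a * kboundary q c g)"
proof
  fix g
  let ?F = "{f. c f \<noteq> 0}"
  have fin: "finite ?F" using assms by (simp add: is_kchain_def)
  show "kboundary q (\<lambda>f. a * c f) g = a * kboundary q c g"
    apply (subst kboundary_on[OF fin], force)
    apply (subst kboundary_on[OF fin], force)
    by (auto simp: sum_distrib_left intro!: sum.cong)
qed

lemma kboundary_zero: "kboundary q kzero = kzero"
  by (auto simp: kboundary_def kzero_def)

lemma kbdry_zero: "is_kbdry p X kzero"
  unfolding is_kbdry_def using kchain_zero kboundary_zero by blast

lemma kbdry_add:
  assumes "is_kbdry p X c" "is_kbdry p X d"
  shows "is_kbdry p X (\<lambda>f. c f + d f)"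
proof -
  obtain c' d' where "is_kchain (Suc p) X c'" "kboundary (Suc p) c' = c"
     "is_kchain (Suc p) X d'" "kboundary (Suc p) d' = d" using assms by (auto simp: is_kbdry_def)
  then show ?thesis unfolding is_kbdry_def
    by (intro exI[of _ "\<lambda>f. c' f + d' f"]) (simp add: kchain_add kboundary_add)
qed

lemma kbdry_smult:
  assumes "is_kbdry p X c"
  shows "is_kbdry p X (\<lambda>f. a * c f)"
proof -
  obtain c' where "is_kchain (Suc p) X c'" "kboundary (Suc p) c' = c"
    using assms by (auto simp: is_kbdry_def)
  then show ?thesis unfolding is_kbdry_def
    by (intro exI[of _ "\<lambda>f. a * c' f"]) (simp add: kchain_smult kboundary_smult)
qed

lemma kbdry_cong: "is_kbdry p X c \<Longrightarrow> (\<And>f. c f = d f) \<Longrightarrow> is_kbdry p X d"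
  by (metis ext)

lemma kbdry_mono:
  assumes "is_kbdry p (top_of_set A) c" "A \<subseteq> B"
  shows "is_kbdry p (top_of_set B) c"
  using assms kchain_mono unfolding is_kbdry_def by blast

lemma khom_refl: "khomologous p X c c"
  unfolding khomologous_def using kbdry_zero by (simp add: kzero_def)

lemma khom_sym: "khomologous p X c d \<Longrightarrow> khomologous p X d c"
  unfolding khomologous_def by (rule kbdry_cong, erule kbdry_smult[where a="-1"]) simp

lemma khom_trans: "khomologous p X c d \<Longrightarrow> khomologous p X d e \<Longrightarrow> khomologous p X c e"
  unfolding khomologous_def
proof -
  assume "is_kbdry p X (\<lambda>f. c f - d f)" "is_kbdry p X (\<lambda>f. d f - e f)"
  then have "is_kbdry p X (\<lambda>f. (c f - d f) + (d f - e f))" by (rule kbdry_add)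
  then show "is_kbdry p X (\<lambda>f. c f - e f)" by (rule kbdry_cong) simp
qed

lemma khom_mono: "khomologous p (top_of_set A) c d \<Longrightarrow> A \<subseteq> B \<Longrightarrow> khomologous p (top_of_set B) c d"
  unfolding khomologous_def using kbdry_mono by blast

lemma kcycle_mono: "is_kcycle p (top_of_set A) c \<Longrightarrow> A \<subseteq> B \<Longrightarrow> is_kcycle p (top_of_set B) c"
  unfolding is_kcycle_def using kchain_mono by blast

lemma khom_lincomb:
  assumes "finite I" "\<And>i. i \<in> I \<Longrightarrow> khomologous p X (v i) (w i)"
  shows "khomologous p X (klincomb I a v) (klincomb I a w)"
  using assms
proof (induction I rule: finite_induct)
  case empty then show ?case by (simp add: klincomb_def khom_refl)
next
  case (insert x F)
  have "is_kbdry p X (\<lambda>f. a x * (v x f - w x f) + (klincomb F a v f - klincomb F a w f))"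
    using insert unfolding khomologous_def by (intro kbdry_add kbdry_smult) auto
  then have "is_kbdry p X (\<lambda>f. klincomb (insert x F) a v f - klincomb (insert x F) a w f)"
    by (rule kbdry_cong) (simp add: klincomb_def algebra_simps insert)
  then show ?case unfolding khomologous_def .
qed




lemma mult_if0: "(c::'a::field) * (if P then x else 0) = (if P then c * x else 0)"
  by simp

lemma swap3: "(\<Sum>a\<in>A. \<Sum>b\<in>B. \<Sum>c\<in>C. X a b c) = (\<Sum>c\<in>C. \<Sum>b\<in>B. \<Sum>a\<in>A. X a b c)"
proof -
  have "(\<Sum>a\<in>A. \<Sum>b\<in>B. \<Sum>c\<in>C. X a b c) = (\<Sum>a\<in>A. \<Sum>c\<in>C. \<Sum>b\<in>B. X a b c)"
    by (rule sum.cong[OF refl], rule sum.swap)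
  also have "\<dots> = (\<Sum>c\<in>C. \<Sum>a\<in>A. \<Sum>b\<in>B. X a b c)" by (rule sum.swap)
  also have "\<dots> = (\<Sum>c\<in>C. \<Sum>b\<in>B. \<Sum>a\<in>A. X a b c)" by (rule sum.cong[OF refl], rule sum.swap)
  finally show ?thesis .
qed

lemma swap3b: "(\<Sum>a\<in>A. \<Sum>b\<in>B. \<Sum>c\<in>C. X a b c) = (\<Sum>b\<in>B. \<Sum>c\<in>C. \<Sum>a\<in>A. X a b c)"
proof -
  have "(\<Sum>a\<in>A. \<Sum>b\<in>B. \<Sum>c\<in>C. X a b c) = (\<Sum>b\<in>B. \<Sum>a\<in>A. \<Sum>c\<in>C. X a b c)"
    by (rule sum.swap)
  also have "\<dots> = (\<Sum>b\<in>B. \<Sum>c\<in>C. \<Sum>a\<in>A. X a b c)" by (rule sum.cong[OF refl], rule sum.swap)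
  finally show ?thesis .
qed

lemma face_map_comm:
  assumes "1 \<le> q" "k \<le> q"
  shows "singular_face q k (simplex_map q g f) = simplex_map (q - 1) g (singular_face q k f)"
  using assms by (simp add: singular_face_simplex_map) (auto simp: simplex_map_def singular_face_def)

lemma kpush_supp:
  "{f'. kpush q g c f' \<noteq> 0} \<subseteq> simplex_map q g ` {f. c f \<noteq> 0}"
proof
  fix f' assume a: "f' \<in> {f'. kpush q g c f' \<noteq> 0}"
  show "f' \<in> simplex_map q g ` {f. c f \<noteq> 0}"
  proof (rule ccontr)
    assume n: "f' \<notin> simplex_map q g ` {f. c f \<noteq> 0}"
    have "kpush q g c f' = 0" unfolding kpush_def using n by (intro sum.neutral) blast
    then show False using a by simp
  qed
qed

lemma kchain_push:
  assumes "is_kchain q X c" "continuous_map X Y g"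
  shows "is_kchain q Y (kpush q g c)"
proof -
  have fin: "finite {f. c f \<noteq> 0}" using assms by (simp add: is_kchain_def)
  have "finite {f'. kpush q g c f' \<noteq> 0}" by (rule finite_subset[OF kpush_supp]) (simp add: fin)
  moreover have "singular_simplex q Y f'" if "kpush q g c f' \<noteq> 0" for f'
  proof -
    have "f' \<in> simplex_map q g ` {f. c f \<noteq> 0}" using kpush_supp[of q g c] that by blast
    then obtain f where "c f \<noteq> 0" "f' = simplex_map q g f" by blast
    then show ?thesis using assms singular_simplex_simplex_map unfolding is_kchain_def by blast
  qed
  ultimately show ?thesis unfolding is_kchain_def by blast
qed

lemma kboundary_supp:
  "{g'. kboundary q c g' \<noteq> 0} \<subseteq> (\<lambda>(f,k). singular_face q k f) ` ({f. c f \<noteq> 0} \<times> {..q})"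
proof
  fix g' assume a: "g' \<in> {g'. kboundary q c g' \<noteq> 0}"
  show "g' \<in> (\<lambda>(f,k). singular_face q k f) ` ({f. c f \<noteq> 0} \<times> {..q})"
  proof (rule ccontr)
    assume n: "g' \<notin> (\<lambda>(f,k). singular_face q k f) ` ({f. c f \<noteq> 0} \<times> {..q})"
    have "\<forall>f\<in>{f. c f \<noteq> 0}. \<forall>k\<in>{..q}. singular_face q k f \<noteq> g'" using n by force
    then have "kboundary q c g' = 0" unfolding kboundary_def
      by (auto intro!: sum.neutral)
    then show False using a by simp
  qed
qed

lemma kpush_boundary:
  assumes "is_kchain (Suc p) X d"
  shows "kboundary (Suc p) (kpush (Suc p) g d) = kpush p g (kboundary (Suc p) d)"
proof
  fix h
  define F where "F = {f. d f \<noteq> 0}"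
  have finF: "finite F" using assms by (simp add: is_kchain_def F_def)
  define F' where "F' = simplex_map (Suc p) g ` F"
  have finF': "finite F'" using finF by (simp add: F'_def)
  define G where "G = (\<lambda>(f,k). singular_face (Suc p) k f) ` (F \<times> {..Suc p})"
  have finG: "finite G" using finF by (simp add: G_def)
  have memG: "\<And>f k. f \<in> F \<Longrightarrow> k \<le> Suc p \<Longrightarrow> singular_face (Suc p) k f \<in> G"
    unfolding G_def by (rule_tac x="(f,k)" in image_eqI) auto
  have subF: "{f. d f \<noteq> 0} \<subseteq> F" by (simp add: F_def)
  have subF': "{f'. kpush (Suc p) g d f' \<noteq> 0} \<subseteq> F'"
    using kpush_supp[of "Suc p" g d] by (simp add: F'_def F_def)
  have subG: "{g'. kboundary (Suc p) d g' \<noteq> 0} \<subseteq> G"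
    using kboundary_supp[of "Suc p" d] by (simp add: G_def F_def)
  have pushF: "\<And>f'. kpush (Suc p) g d f' = (\<Sum>f\<in>F. if simplex_map (Suc p) g f = f' then d f else 0)"
    by (rule kpush_on[OF finF subF])
  have bdF: "\<And>g'. kboundary (Suc p) d g' = (\<Sum>f\<in>F. \<Sum>k\<le>Suc p. if singular_face (Suc p) k f = g' then (- 1) ^ k * d f else 0)"
    using kboundary_on[OF finF subF] by simp
  have "kboundary (Suc p) (kpush (Suc p) g d) h =
     (\<Sum>f'\<in>F'. \<Sum>k\<le>Suc p. if singular_face (Suc p) k f' = h then (- 1) ^ k * kpush (Suc p) g d f' else 0)"
    using kboundary_on[OF finF' subF'] by simp
  also have "\<dots> = (\<Sum>f'\<in>F'. \<Sum>k\<le>Suc p. \<Sum>f\<in>F. if simplex_map (Suc p) g f = f' then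
         (if singular_face (Suc p) k f' = h then (- 1) ^ k * d f else 0) else 0)"
    unfolding pushF
  proof (intro sum.cong refl)
    fix f' k
    show "(if singular_face (Suc p) k f' = h then (- 1) ^ k * (\<Sum>f\<in>F. if simplex_map (Suc p) g f = f' then d f else 0) else 0) =
      (\<Sum>f\<in>F. if simplex_map (Suc p) g f = f' then (if singular_face (Suc p) k f' = h then (- 1) ^ k * d f else 0) else 0)"
      by (cases "singular_face (Suc p) k f' = h") (simp_all add: sum_distrib_left mult_if0 cong: if_cong)
  qed
  also have "\<dots> = (\<Sum>f\<in>F. \<Sum>k\<le>Suc p. \<Sum>f'\<in>F'. if simplex_map (Suc p) g f = f' then
         (if singular_face (Suc p) k f' = h then (- 1) ^ k * d f else 0) else 0)"
    by (rule swap3)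
  also have "\<dots> = (\<Sum>f\<in>F. \<Sum>k\<le>Suc p. if singular_face (Suc p) k (simplex_map (Suc p) g f) = h then (- 1) ^ k * d f else 0)"
    by (intro sum.cong refl) (subst sum.delta'[OF finF'], auto simp: F'_def)
  finally have L: "kboundary (Suc p) (kpush (Suc p) g d) h =
      (\<Sum>f\<in>F. \<Sum>k\<le>Suc p. if singular_face (Suc p) k (simplex_map (Suc p) g f) = h then (- 1) ^ k * d f else 0)" .
  have "kpush p g (kboundary (Suc p) d) h = (\<Sum>g'\<in>G. if simplex_map p g g' = h then kboundary (Suc p) d g' else 0)"
    by (rule kpush_on[OF finG subG])
  also have "\<dots> = (\<Sum>g'\<in>G. \<Sum>f\<in>F. \<Sum>k\<le>Suc p. if singular_face (Suc p) k f = g' then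
        (if simplex_map p g g' = h then (- 1) ^ k * d f else 0) else 0)"
    unfolding bdF
  proof (intro sum.cong refl)
    fix g'
    show "(if simplex_map p g g' = h then (\<Sum>f\<in>F. \<Sum>k\<le>Suc p. if singular_face (Suc p) k f = g' then (- 1) ^ k * d f else 0) else 0) =
      (\<Sum>f\<in>F. \<Sum>k\<le>Suc p. if singular_face (Suc p) k f = g' then
        (if simplex_map p g g' = h then (- 1) ^ k * d f else 0) else 0)"
      by (cases "simplex_map p g g' = h") (simp_all cong: if_cong)
  qed
  also have "\<dots> = (\<Sum>f\<in>F. \<Sum>k\<le>Suc p. \<Sum>g'\<in>G. if singular_face (Suc p) k f = g' then
        (if simplex_map p g g' = h then (- 1) ^ k * d f else 0) else 0)"
    by (rule swap3b)
  also have "\<dots> = (\<Sum>f\<in>F. \<Sum>k\<le>Suc p. if simplex_map p g (singular_face (Suc p) k f) = h then (- 1) ^ k * d f else 0)"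
    by (intro sum.cong refl) (subst sum.delta'[OF finG], auto simp: memG)
  finally have R: "kpush p g (kboundary (Suc p) d) h = (\<Sum>f\<in>F. \<Sum>k\<le>Suc p. if simplex_map p g (singular_face (Suc p) k f) = h then (- 1) ^ k * d f else 0)" .
  show "kboundary (Suc p) (kpush (Suc p) g d) h = kpush p g (kboundary (Suc p) d) h"
    unfolding L R by (intro sum.cong refl) (simp add: face_map_comm)
qed

lemma kpush_diff:
  assumes "finite {f. c f \<noteq> 0}" "finite {f. c' f \<noteq> 0}"
  shows "kpush q g (\<lambda>f. c f - c' f) = (\<lambda>f'. kpush q g c f' - kpush q g c' f')"
proof
  fix f'
  let ?F = "{f. c f \<noteq> 0} \<union> {f. c' f \<noteq> 0}"
  have fin: "finite ?F" using assms by simp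
  show "kpush q g (\<lambda>f. c f - c' f) f' = kpush q g c f' - kpush q g c' f'"
    apply (subst kpush_on[OF fin], force)
    apply (subst kpush_on[OF fin], force)
    apply (subst kpush_on[OF fin], force)
    by (auto simp: sum_subtractf[symmetric] intro!: sum.cong)
qed

lemma kpush_lincomb:
  assumes "finite I" "\<And>i. i \<in> I \<Longrightarrow> finite {f. v i f \<noteq> 0}"
  shows "kpush q g (klincomb I a v) = klincomb I a (\<lambda>i. kpush q g (v i))"
proof
  fix f'
  let ?F = "\<Union>i\<in>I. {f. v i f \<noteq> 0}"
  have fin: "finite ?F" using assms by simp
  have sub: "{f. klincomb I a v f \<noteq> 0} \<subseteq> ?F"
  proof
    fix f assume "f \<in> {f. klincomb I a v f \<noteq> 0}"
    then have "(\<Sum>i\<in>I. a i * v i f) \<noteq> 0" by (simp add: klincomb_def)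
    then obtain i where "i \<in> I" "a i * v i f \<noteq> 0" by (meson sum.neutral)
    then show "f \<in> ?F" by auto
  qed
  show "kpush q g (klincomb I a v) f' = klincomb I a (\<lambda>i. kpush q g (v i)) f'"
  proof -
    have "kpush q g (klincomb I a v) f' = (\<Sum>f\<in>?F. if simplex_map q g f = f' then klincomb I a v f else 0)"
      by (rule kpush_on[OF fin sub])
    also have "\<dots> = (\<Sum>f\<in>?F. if simplex_map q g f = f' then (\<Sum>i\<in>I. a i * v i f) else 0)"
      unfolding klincomb_def by simp
    also have "\<dots> = (\<Sum>f\<in>?F. \<Sum>i\<in>I. if simplex_map q g f = f' then a i * v i f else 0)"
      by (intro sum.cong refl) simp
    also have "\<dots> = (\<Sum>i\<in>I. \<Sum>f\<in>?F. if simplex_map q g f = f' then a i * v i f else 0)"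
      by (rule sum.swap)
    also have "\<dots> = (\<Sum>i\<in>I. a i * kpush q g (v i) f')"
    proof (intro sum.cong refl)
      fix i assume "i \<in> I"
      then have "kpush q g (v i) f' = (\<Sum>f\<in>?F. if simplex_map q g f = f' then v i f else 0)"
        by (intro kpush_on[OF fin]) auto
      then show "(\<Sum>f\<in>?F. if simplex_map q g f = f' then a i * v i f else 0) = a i * kpush q g (v i) f'"
        by (simp add: sum_distrib_left) (intro sum.cong, auto)
    qed
    finally show ?thesis by (simp add: klincomb_def)
  qed
qed

lemma khom_push:
  assumes "is_kchain q X c" "is_kchain q X c'" "khomologous q X c c'" "continuous_map X Y g"
  shows "khomologous q Y (kpush q g c) (kpush q g c')"
proof -
  obtain d where d: "is_kchain (Suc q) X d" "kboundary (Suc q) d = (\<lambda>f. c f - c' f)"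
    using assms(3) by (auto simp: khomologous_def is_kbdry_def)
  have fc: "finite {f. c f \<noteq> 0}" "finite {f. c' f \<noteq> 0}" using assms(1,2) by (simp_all add: is_kchain_def)
  have "kboundary (Suc q) (kpush (Suc q) g d) = kpush q g (\<lambda>f. c f - c' f)"
    using kpush_boundary[OF d(1)] d(2) by simp
  also have "\<dots> = (\<lambda>f'. kpush q g c f' - kpush q g c' f')"
    by (rule kpush_diff[OF fc])
  finally show ?thesis unfolding khomologous_def is_kbdry_def
    using kchain_push[OF d(1) assms(4)] by blast
qed




lemma hbasis_unique_coef:
  assumes "hbasis p X I v" "khomologous p X c (klincomb I a v)" "khomologous p X c (klincomb I b v)"
  shows "\<forall>i\<in>I. a i = b i"
proof -
  have "khomologous p X (klincomb I a v) (klincomb I b v)"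
    using assms khom_sym khom_trans by blast
  then have "is_kbdry p X (\<lambda>f. klincomb I a v f - klincomb I b v f)" by (simp add: khomologous_def)
  then have "is_kbdry p X (\<lambda>f. klincomb I (\<lambda>i. a i - b i) v f - kzero f)"
    by (rule kbdry_cong) (simp add: klincomb_def kzero_def sum_subtractf algebra_simps)
  then have "khomologous p X (klincomb I (\<lambda>i. a i - b i) v) kzero" by (simp add: khomologous_def)
  then have "\<forall>i\<in>I. a i - b i = 0" using assms(1) unfolding hbasis_def by blast
  then show ?thesis by simp
qed

lemma hcoord_prop:
  assumes "hbasis p X I v" "is_kcycle p X c"
  shows "(\<forall>i. i \<notin> I \<longrightarrow> hcoord p X I v c i = 0) \<and> khomologous p X c (klincomb I (hcoord p X I v c) v)"
proof -
  let ?P = "\<lambda>a. (\<forall>i. i \<notin> I \<longrightarrow> a i = 0) \<and> khomologous p X c (klincomb I a v)"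
  obtain a where a: "khomologous p X c (klincomb I a v)" using assms unfolding hbasis_def by blast
  define a' where "a' = (\<lambda>i. if i \<in> I then a i else 0)"
  have "klincomb I a' v = klincomb I a v" by (auto simp: klincomb_def a'_def intro!: sum.cong)
  then have Pa': "?P a'" using a by (auto simp: a'_def)
  have uq: "b = a'" if "?P b" for b
  proof
    fix i show "b i = a' i"
      using hbasis_unique_coef[OF assms(1), of c b a'] that Pa' by (cases "i \<in> I") auto
  qed
  have "?P (THE a. ?P a)" by (rule theI[of ?P a', OF Pa' uq])
  then show ?thesis by (simp add: hcoord_def)
qed

lemma hcoord_eq:
  assumes "hbasis p X I v" "\<forall>i. i \<notin> I \<longrightarrow> a i = 0" "khomologous p X c (klincomb I a v)"
  shows "hcoord p X I v c = a"
  unfolding hcoord_def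
proof (rule the_equality)
  show "(\<forall>i. i \<notin> I \<longrightarrow> a i = 0) \<and> khomologous p X c (klincomb I a v)" using assms by blast
next
  fix b assume b: "(\<forall>i. i \<notin> I \<longrightarrow> b i = 0) \<and> khomologous p X c (klincomb I b v)"
  show "b = a"
  proof
    fix i show "b i = a i"
      using hbasis_unique_coef[OF assms(1), of c b a] b assms by (cases "i \<in> I") auto
  qed
qed




lemma kill_lemma:
  assumes hbG: "hbasis p (top_of_set GC) I2 e2"
    and hbT: "hbasis p (top_of_set TC) V e"
    and cont: "continuous_map (top_of_set GC) (top_of_set TC) \<pi>"
    and pushrel: "\<forall>i\<in>I2. khomologous p (top_of_set TC) (kpush p \<pi> (e2 i)) (if i \<in> V then e i else kzero)"
    and y: "is_kcycle p (top_of_set GC) y"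
    and ky: "khomologous p (top_of_set TC) (kpush p \<pi> y) kzero"
  shows "\<forall>i\<in>I2 \<inter> V. hcoord p (top_of_set GC) I2 e2 y i = 0"
proof -
  define A where "A = hcoord p (top_of_set GC) I2 e2 y"
  have hp: "(\<forall>i. i \<notin> I2 \<longrightarrow> A i = 0)" "khomologous p (top_of_set GC) y (klincomb I2 A e2)"
    using hcoord_prop[OF hbG y] by (simp_all add: A_def)
  have finI2: "finite I2" and e2c: "\<And>i. i \<in> I2 \<Longrightarrow> is_kchain p (top_of_set GC) (e2 i)"
    using hbG by (auto simp: hbasis_def is_kcycle_def)
  have finV: "finite V" using hbT by (simp add: hbasis_def)
  have ychain: "is_kchain p (top_of_set GC) y" using y by (simp add: is_kcycle_def)
  have lchain: "is_kchain p (top_of_set GC) (klincomb I2 A e2)"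
    by (rule kchain_lincomb[OF finI2 e2c])
  have h1: "khomologous p (top_of_set TC) (kpush p \<pi> y) (kpush p \<pi> (klincomb I2 A e2))"
    by (rule khom_push[OF ychain lchain hp(2) cont])
  have h2: "kpush p \<pi> (klincomb I2 A e2) = klincomb I2 A (\<lambda>i. kpush p \<pi> (e2 i))"
    using e2c finI2 by (intro kpush_lincomb) (auto simp: is_kchain_def)
  have h3: "khomologous p (top_of_set TC) (klincomb I2 A (\<lambda>i. kpush p \<pi> (e2 i)))
              (klincomb I2 A (\<lambda>i. if i \<in> V then e i else kzero))"
    using pushrel finI2 by (intro khom_lincomb) auto
  define A' where "A' = (\<lambda>i. if i \<in> I2 then A i else 0)"
  have h4: "klincomb I2 A (\<lambda>i. if i \<in> V then e i else kzero) = klincomb V A' e"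
  proof
    fix f
    have "(\<Sum>i\<in>I2. A i * (if i \<in> V then e i else kzero) f) = (\<Sum>i\<in>I2 \<inter> V. A i * e i f)"
      using finI2 by (subst sum.inter_restrict) (auto simp: kzero_def intro!: sum.cong)
    also have "\<dots> = (\<Sum>i\<in>V \<inter> I2. A i * e i f)" by (simp add: Int_commute)
    also have "\<dots> = (\<Sum>i\<in>V. A' i * e i f)"
      using finV by (subst sum.inter_restrict) (auto simp: A'_def intro!: sum.cong)
    finally show "klincomb I2 A (\<lambda>i. if i \<in> V then e i else kzero) f = klincomb V A' e f"
      by (simp add: klincomb_def)
  qed
  have "khomologous p (top_of_set TC) (klincomb V A' e) kzero"
    using h1 h2 h3 h4 ky by (metis khom_sym khom_trans)
  then have "\<forall>i\<in>V. A' i = 0" using hbT unfolding hbasis_def by blast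
  then show ?thesis by (auto simp: A_def[symmetric] A'_def)
qed

definition sysd :: "nat \<Rightarrow> ('a::metric_space) set \<Rightarrow> ('a \<times> 'a) set \<Rightarrow> 'a set \<Rightarrow> (nat \<times> nat \<Rightarrow> nat)
   \<Rightarrow> ((nat \<times> nat) \<times> nat \<Rightarrow> ('a,'k::field) kchain)
   \<Rightarrow> ((nat \<times> nat) \<times> nat \<Rightarrow> ('a \<times> 'a,'k) kchain)
   \<Rightarrow> ((nat \<times> nat) \<times> nat \<Rightarrow> ('a,'k) kchain) \<Rightarrow> bool" where
  "sysd p D G I m e1 e2 e3 \<longleftrightarrow> is_interval_decomp p (top_of_set D) (top_of_set G) (top_of_set I) fst snd m e1 e2 e3
     \<and> fst ` G \<subseteq> D \<and> snd ` G \<subseteq> I"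

lemma vidx21: "i \<in> vidx 2 m \<Longrightarrow> (i \<in> vidx 1 m \<longleftrightarrow> fst (fst i) = 1)"
  by (cases i) (auto simp: vidx_def intervals3_def)

lemma vidx23: "i \<in> vidx 2 m \<Longrightarrow> (i \<in> vidx 3 m \<longleftrightarrow> snd (fst i) = 3)"
  by (cases i) (auto simp: vidx_def intervals3_def)

lemma vidx13: "v \<in> {1,2,3} \<Longrightarrow> ((1,3),j) \<in> vidx v m \<longleftrightarrow> j < m (1,3)"
  by (auto simp: vidx_def intervals3_def)

lemma vidx2_not13: "((b,d),j) \<in> vidx 2 m \<Longrightarrow> (b,d) \<noteq> (1,3) \<Longrightarrow> b \<noteq> 1 \<or> d \<noteq> 3"
  by auto

lemma cont_fst: "fst ` G \<subseteq> D \<Longrightarrow> continuous_map (top_of_set G) (top_of_set D) fst"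
  by (auto simp: continuous_map_in_subtopology continuous_on_fst continuous_on_id Pi_iff)

lemma cont_snd: "snd ` G \<subseteq> D \<Longrightarrow> continuous_map (top_of_set G) (top_of_set D) snd"
  by (auto simp: continuous_map_in_subtopology continuous_on_snd continuous_on_id Pi_iff)

lemma pushrel_fst:
  assumes "sysd p D G I m e1 e2 e3"
  shows "\<forall>i\<in>vidx 2 m. khomologous p (top_of_set D) (kpush p fst (e2 i)) (if i \<in> vidx 1 m then e1 i else kzero)"
proof
  fix i assume i: "i \<in> vidx 2 m"
  obtain b d j where ij: "i = ((b,d),j)" by (metis prod.collapse)
  show "khomologous p (top_of_set D) (kpush p fst (e2 i)) (if i \<in> vidx 1 m then e1 i else kzero)"
    using assms i vidx21[OF i] unfolding sysd_def is_interval_decomp_def ij by auto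
qed

lemma pushrel_snd:
  assumes "sysd p D G I m e1 e2 e3"
  shows "\<forall>i\<in>vidx 2 m. khomologous p (top_of_set I) (kpush p snd (e2 i)) (if i \<in> vidx 3 m then e3 i else kzero)"
proof
  fix i assume i: "i \<in> vidx 2 m"
  obtain b d j where ij: "i = ((b,d),j)" by (metis prod.collapse)
  show "khomologous p (top_of_set I) (kpush p snd (e2 i)) (if i \<in> vidx 3 m then e3 i else kzero)"
    using assms i vidx23[OF i] unfolding sysd_def is_interval_decomp_def ij by auto
qed

lemma coord_zero:
  assumes sB: "sysd p DB GB IB mB e1B e2B e3B" and sC: "sysd p DC GC IC mC e1C e2C e3C"
    and sub: "GB \<subseteq> GC" "DB \<subseteq> DC" "IB \<subseteq> IC"
    and k: "((b,d),j0) \<in> vidx 2 mB" "(b,d) \<noteq> (1,3)" and i: "i' < mC (1,3)"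
  shows "hcoord p (top_of_set GC) (vidx 2 mC) e2C (e2B ((b,d),j0)) ((1,3),i') = 0"
proof -
  have dB: "is_interval_decomp p (top_of_set DB) (top_of_set GB) (top_of_set IB) fst snd mB e1B e2B e3B"
    using sB by (simp add: sysd_def)
  have dC: "is_interval_decomp p (top_of_set DC) (top_of_set GC) (top_of_set IC) fst snd mC e1C e2C e3C"
    using sC by (simp add: sysd_def)
  have hbG: "hbasis p (top_of_set GC) (vidx 2 mC) e2C" using dC by (simp add: is_interval_decomp_def)
  have ycB: "is_kcycle p (top_of_set GB) (e2B ((b,d),j0))"
    using dB k(1) by (auto simp: is_interval_decomp_def hbasis_def)
  have yc: "is_kcycle p (top_of_set GC) (e2B ((b,d),j0))" by (rule kcycle_mono[OF ycB sub(1)])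
  have pB: "khomologous p (top_of_set DB) (kpush p fst (e2B ((b,d),j0))) (if b = 1 then e1B ((b,d),j0) else kzero)"
    "khomologous p (top_of_set IB) (kpush p snd (e2B ((b,d),j0))) (if d = 3 then e3B ((b,d),j0) else kzero)"
    using dB k(1) unfolding is_interval_decomp_def by blast+
  have iin2: "((1,3),i') \<in> vidx 2 mC" using i by (simp add: vidx_def intervals3_def)
  consider "b \<noteq> 1" | "d \<noteq> 3" using k by blast
  then show ?thesis
  proof cases
    case 1
    have ky: "khomologous p (top_of_set DC) (kpush p fst (e2B ((b,d),j0))) kzero"
      using khom_mono[OF _ sub(2)] pB(1) 1 by simp
    have "\<forall>i\<in>vidx 2 mC \<inter> vidx 1 mC. hcoord p (top_of_set GC) (vidx 2 mC) e2C (e2B ((b,d),j0)) i = 0"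
      apply (rule kill_lemma[OF hbG _ cont_fst pushrel_fst[OF sC] yc ky])
      using dC sC by (auto simp: is_interval_decomp_def sysd_def)
    then show ?thesis using iin2 i by (auto simp: vidx_def intervals3_def)
  next
    case 2
    have ky: "khomologous p (top_of_set IC) (kpush p snd (e2B ((b,d),j0))) kzero"
      using khom_mono[OF _ sub(3)] pB(2) 2 by simp
    have "\<forall>i\<in>vidx 2 mC \<inter> vidx 3 mC. hcoord p (top_of_set GC) (vidx 2 mC) e2C (e2B ((b,d),j0)) i = 0"
      apply (rule kill_lemma[OF hbG _ cont_snd pushrel_snd[OF sC] yc ky])
      using dC sC by (auto simp: is_interval_decomp_def sysd_def)
    then show ?thesis using iin2 i by (auto simp: vidx_def intervals3_def)
  qed
qed

lemma coord_comp:
  assumes hbB: "hbasis p (top_of_set GB) IB vB" and hbC: "hbasis p (top_of_set GC) IC vC"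
    and sub: "GB \<subseteq> GC" and x: "is_kcycle p (top_of_set GB) x"
  shows "hcoord p (top_of_set GC) IC vC x =
     (\<lambda>i. \<Sum>k\<in>IB. hcoord p (top_of_set GB) IB vB x k * hcoord p (top_of_set GC) IC vC (vB k) i)"
proof (rule hcoord_eq[OF hbC])
  let ?hB = "hcoord p (top_of_set GB) IB vB x"
  let ?hC = "\<lambda>k. hcoord p (top_of_set GC) IC vC (vB k)"
  have finB: "finite IB" using hbB by (simp add: hbasis_def)
  have finC: "finite IC" using hbC by (simp add: hbasis_def)
  have vBc: "is_kcycle p (top_of_set GC) (vB k)" if "k \<in> IB" for k
  proof -
    have "is_kcycle p (top_of_set GB) (vB k)" using hbB that by (simp add: hbasis_def)
    then show ?thesis by (rule kcycle_mono[OF _ sub])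
  qed
  have hCp: "(\<forall>i. i \<notin> IC \<longrightarrow> ?hC k i = 0) \<and> khomologous p (top_of_set GC) (vB k) (klincomb IC (?hC k) vC)"
    if "k \<in> IB" for k
    by (rule hcoord_prop[OF hbC vBc[OF that]])
  show "\<forall>i. i \<notin> IC \<longrightarrow> (\<Sum>k\<in>IB. ?hB k * ?hC k i) = 0"
  proof (intro allI impI)
    fix i assume i: "i \<notin> IC"
    have z: "?hC k i = 0" if "k \<in> IB" for k using hCp[OF that] i by blast
    show "(\<Sum>k\<in>IB. ?hB k * ?hC k i) = 0" by (rule sum.neutral) (simp add: z)
  qed
  have "khomologous p (top_of_set GB) x (klincomb IB ?hB vB)" using hcoord_prop[OF hbB x] by blast
  then have h1: "khomologous p (top_of_set GC) x (klincomb IB ?hB vB)" using khom_mono[OF _ sub] by blast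
  have h2: "khomologous p (top_of_set GC) (klincomb IB ?hB vB) (klincomb IB ?hB (\<lambda>k. klincomb IC (?hC k) vC))"
  proof (rule khom_lincomb[OF finB])
    fix k assume "k \<in> IB" then show "khomologous p (top_of_set GC) (vB k) (klincomb IC (?hC k) vC)"
      using hCp by blast
  qed
  have h3: "klincomb IB ?hB (\<lambda>k. klincomb IC (?hC k) vC) = klincomb IC (\<lambda>i. \<Sum>k\<in>IB. ?hB k * ?hC k i) vC"
  proof
    fix f
    have "(\<Sum>k\<in>IB. ?hB k * (\<Sum>i\<in>IC. ?hC k i * vC i f)) = (\<Sum>k\<in>IB. \<Sum>i\<in>IC. ?hB k * ?hC k i * vC i f)"
      by (simp add: sum_distrib_left mult.assoc)
    also have "\<dots> = (\<Sum>i\<in>IC. \<Sum>k\<in>IB. ?hB k * ?hC k i * vC i f)" by (rule sum.swap)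
    also have "\<dots> = (\<Sum>i\<in>IC. (\<Sum>k\<in>IB. ?hB k * ?hC k i) * vC i f)" by (simp add: sum_distrib_right)
    finally show "klincomb IB ?hB (\<lambda>k. klincomb IC (?hC k) vC) f = klincomb IC (\<lambda>i. \<Sum>k\<in>IB. ?hB k * ?hC k i) vC f"
      by (simp add: klincomb_def)
  qed
  show "khomologous p (top_of_set GC) x (klincomb IC (\<lambda>i. \<Sum>k\<in>IB. ?hB k * ?hC k i) vC)"
    using khom_trans[OF h1 h2] h3 by simp
qed




definition Tm :: "nat \<Rightarrow> ('a::metric_space \<times> 'a) set \<Rightarrow> (nat \<times> nat \<Rightarrow> nat)
   \<Rightarrow> ((nat \<times> nat) \<times> nat \<Rightarrow> ('a \<times> 'a,'k::field) kchain)
   \<Rightarrow> ((nat \<times> nat) \<times> nat \<Rightarrow> ('a \<times> 'a,'k) kchain) \<Rightarrow> nat \<Rightarrow> nat \<Rightarrow> 'k" where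
  "Tm p G m e2 e2' i j = hcoord p (top_of_set G) (vidx 2 m) e2 (e2' ((1,3),j)) ((1,3),i)"

lemma block_comp:
  assumes sA: "sysd p DA GA IA mA e1A e2A e3A" and sB: "sysd p DB GB IB mB e1B e2B e3B"
    and sC: "sysd p DC GC IC mC e1C e2C e3C"
    and sub: "GA \<subseteq> GB" "GB \<subseteq> GC" "DB \<subseteq> DC" "IB \<subseteq> IC"
    and j: "j < mA (1,3)" and i: "i < mC (1,3)"
  shows "(\<Sum>k<mB (1,3). Tm p GC mC e2C e2B i k * Tm p GB mB e2B e2A k j) = Tm p GC mC e2C e2A i j"
proof -
  have hbA: "hbasis p (top_of_set GA) (vidx 2 mA) e2A" using sA by (simp add: sysd_def is_interval_decomp_def)
  have hbB: "hbasis p (top_of_set GB) (vidx 2 mB) e2B" using sB by (simp add: sysd_def is_interval_decomp_def)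
  have hbC: "hbasis p (top_of_set GC) (vidx 2 mC) e2C" using sC by (simp add: sysd_def is_interval_decomp_def)
  have jA: "((1,3),j) \<in> vidx 2 mA" using j by (simp add: vidx_def intervals3_def)
  have xA: "is_kcycle p (top_of_set GA) (e2A ((1,3),j))" using hbA jA by (simp add: hbasis_def)
  have xB: "is_kcycle p (top_of_set GB) (e2A ((1,3),j))" by (rule kcycle_mono[OF xA sub(1)])
  let ?hB = "hcoord p (top_of_set GB) (vidx 2 mB) e2B (e2A ((1,3),j))"
  let ?hC = "\<lambda>k. hcoord p (top_of_set GC) (vidx 2 mC) e2C (e2B k) ((1,3),i)"
  have "Tm p GC mC e2C e2A i j = (\<Sum>k\<in>vidx 2 mB. ?hB k * ?hC k)"
    unfolding Tm_def by (subst coord_comp[OF hbB hbC sub(2) xB]) simp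
  also have "\<dots> = (\<Sum>k\<in>(\<lambda>k'. ((1::nat,3::nat),k')) ` {..<mB (1,3)}. ?hB k * ?hC k)"
  proof (rule sum.mono_neutral_right)
    show "finite (vidx 2 mB)" using hbB by (simp add: hbasis_def)
    show "(\<lambda>k'. ((1::nat,3::nat),k')) ` {..<mB (1,3)} \<subseteq> vidx 2 mB"
      by (auto simp: vidx_def intervals3_def)
    show "\<forall>k\<in>vidx 2 mB - (\<lambda>k'. ((1::nat,3::nat),k')) ` {..<mB (1,3)}. ?hB k * ?hC k = 0"
    proof
      fix k assume k: "k \<in> vidx 2 mB - (\<lambda>k'. ((1::nat,3::nat),k')) ` {..<mB (1,3)}"
      obtain b d j0 where kk: "k = ((b,d),j0)" by (metis prod.collapse)
      have k2: "((b,d),j0) \<in> vidx 2 mB" using k kk by simp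
      have "(b,d) \<noteq> (1,3)"
      proof
        assume "(b,d) = (1,3)"
        then have "k \<in> (\<lambda>k'. ((1::nat,3::nat),k')) ` {..<mB (1,3)}"
          using k2 kk by (auto simp: vidx_def intervals3_def)
        then show False using k by blast
      qed
      then have "?hC k = 0" unfolding kk by (rule coord_zero[OF sB sC sub(2,3,4) k2 _ i])
      then show "?hB k * ?hC k = 0" by simp
    qed
  qed
  also have "\<dots> = (\<Sum>k'<mB (1,3). ?hB ((1,3),k') * ?hC ((1,3),k'))"
    by (subst sum.reindex) (auto simp: inj_on_def)
  also have "\<dots> = (\<Sum>k<mB (1,3). Tm p GC mC e2C e2B i k * Tm p GB mB e2B e2A k j)"
    by (simp add: Tm_def mult.commute)
  finally show ?thesis by simp
qed




lemma thickE_mono: "r \<le> t \<Longrightarrow> thickE U r \<subseteq> thickE U t"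
  unfolding thickE_def by (auto intro: order_trans)

lemma thickM_mono: "r \<le> t \<Longrightarrow> thickM U r \<subseteq> thickM U t"
  unfolding thickM_def by (auto intro: order_trans)

lemma dmax_triangle: "dmax z b \<le> dmax z a + dmax a b"
proof -
  have "dist (fst z) (fst b) \<le> dist (fst z) (fst a) + dist (fst a) (fst b)" by (rule dist_triangle)
  moreover have "dist (snd z) (snd b) \<le> dist (snd z) (snd a) + dist (snd a) (snd b)" by (rule dist_triangle)
  ultimately show ?thesis unfolding dmax_def by linarith
qed

lemma fst_thickM: "fst ` thickM (Gr S h) r \<subseteq> thickE S r"
proof
  fix x assume "x \<in> fst ` thickM (Gr S h) r"
  then obtain z u where "x = fst z" "u \<in> S" "dmax z (u, h u) \<le> r" by (auto simp: thickM_def Gr_def)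
  then show "x \<in> thickE S r" unfolding thickE_def dmax_def by force
qed

lemma snd_thickM: "snd ` thickM (Gr S h) r \<subseteq> thickE (h ` S) r"
proof
  fix x assume "x \<in> snd ` thickM (Gr S h) r"
  then obtain z u where "x = snd z" "u \<in> S" "dmax z (u, h u) \<le> r" by (auto simp: thickM_def Gr_def)
  then show "x \<in> thickE (h ` S) r" unfolding thickE_def dmax_def by force
qed

lemma cross_G:
  assumes c: "\<forall>a\<in>Gr S h. \<exists>b\<in>Gr S' h'. dmax a b \<le> \<delta>"
  shows "thickM (Gr S h) r \<subseteq> thickM (Gr S' h') (r + \<delta>)"
proof
  fix z assume "z \<in> thickM (Gr S h) r"
  then obtain a where a: "a \<in> Gr S h" "dmax z a \<le> r" by (auto simp: thickM_def)
  then obtain b where b: "b \<in> Gr S' h'" "dmax a b \<le> \<delta>" using c by blast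
  have "dmax z b \<le> r + \<delta>" using dmax_triangle[of z b a] a b by linarith
  then show "z \<in> thickM (Gr S' h') (r + \<delta>)" using b by (auto simp: thickM_def)
qed

lemma cross_D:
  assumes c: "\<forall>a\<in>Gr S h. \<exists>b\<in>Gr S' h'. dmax a b \<le> \<delta>"
  shows "thickE S r \<subseteq> thickE S' (r + \<delta>)"
proof
  fix z assume "z \<in> thickE S r"
  then obtain u where u: "u \<in> S" "dist z u \<le> r" by (auto simp: thickE_def)
  have "(u, h u) \<in> Gr S h" using u by (auto simp: Gr_def)
  then obtain b where b: "b \<in> Gr S' h'" "dmax (u, h u) b \<le> \<delta>" using c by blast
  then obtain u' where u': "u' \<in> S'" "b = (u', h' u')" by (auto simp: Gr_def)
  have "dist u u' \<le> \<delta>" using b u' by (simp add: dmax_def)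
  then have "dist z u' \<le> r + \<delta>" using u dist_triangle[of z u' u] by linarith
  then show "z \<in> thickE S' (r + \<delta>)" using u' by (auto simp: thickE_def)
qed

lemma cross_I:
  assumes c: "\<forall>a\<in>Gr S h. \<exists>b\<in>Gr S' h'. dmax a b \<le> \<delta>"
  shows "thickE (h ` S) r \<subseteq> thickE (h' ` S') (r + \<delta>)"
proof
  fix z assume "z \<in> thickE (h ` S) r"
  then obtain u where u: "u \<in> S" "dist z (h u) \<le> r" by (auto simp: thickE_def)
  have "(u, h u) \<in> Gr S h" using u by (auto simp: Gr_def)
  then obtain b where b: "b \<in> Gr S' h'" "dmax (u, h u) b \<le> \<delta>" using c by blast
  then obtain u' where u': "u' \<in> S'" "b = (u', h' u')" by (auto simp: Gr_def)
  have "dist (h u) (h' u') \<le> \<delta>" using b u' by (simp add: dmax_def)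
  then have "dist z (h' u') \<le> r + \<delta>" using u dist_triangle[of z "h' u'" "h u"] by linarith
  then show "z \<in> thickE (h' ` S') (r + \<delta>)" using u' by (auto simp: thickE_def)
qed

lemma fam_sys:
  assumes "is_decomp_family p S h m e1 e2 e3" "0 \<le> r"
  shows "sysd p (thickE S r) (thickM (Gr S h) r) (thickE (h ` S) r) (m r) (e1 r) (e2 r) (e3 r)"
  using assms fst_thickM snd_thickM
  unfolding is_decomp_family_def sysd_def dom_sp_def gr_sp_def im_sp_def by blast

abbreviation Fm where
  "Fm p S' h' m' e2' e2 \<delta> \<equiv> (\<lambda>t i k. if 0 \<le> t then Tm p (thickM (Gr S' h') (t + \<delta>)) (m' (t + \<delta>)) (e2' (t + \<delta>)) (e2 t) i k else 0)"

lemma morph: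
  assumes f1: "is_decomp_family p S h m e1 e2 e3" and f2: "is_decomp_family p S' h' m' e1' e2' e3'"
    and d: "0 \<le> \<delta>" and c: "\<forall>a\<in>Gr S h. \<exists>b\<in>Gr S' h'. dmax a b \<le> \<delta>"
  shows "pm_morph (pm_dim m) (pm_tr p S h m e2) (pm_dim m') (pm_tr p S' h' m' e2') \<delta> (Fm p S' h' m' e2' e2 \<delta>)"
  unfolding pm_morph_def
proof (intro allI impI)
  fix s t i j assume st: "s \<le> t" and i: "i < pm_dim m' (t + \<delta>)" and j: "j < pm_dim m s"
  have s0: "0 \<le> s" using j by (auto simp: pm_dim_def split: if_splits)
  have t0: "0 \<le> t" using s0 st by simp
  have i': "i < m' (t + \<delta>) (1,3)" using i t0 d by (simp add: pm_dim_def)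
  have j': "j < m s (1,3)" using j s0 by (simp add: pm_dim_def)
  have sMs: "sysd p (thickE S s) (thickM (Gr S h) s) (thickE (h ` S) s) (m s) (e1 s) (e2 s) (e3 s)"
    by (rule fam_sys[OF f1 s0])
  have sMt: "sysd p (thickE S t) (thickM (Gr S h) t) (thickE (h ` S) t) (m t) (e1 t) (e2 t) (e3 t)"
    by (rule fam_sys[OF f1 t0])
  have sNt: "sysd p (thickE S' (t+\<delta>)) (thickM (Gr S' h') (t+\<delta>)) (thickE (h' ` S') (t+\<delta>)) (m' (t+\<delta>)) (e1' (t+\<delta>)) (e2' (t+\<delta>)) (e3' (t+\<delta>))"
    by (rule fam_sys[OF f2]) (use t0 d in simp)
  have sNs: "sysd p (thickE S' (s+\<delta>)) (thickM (Gr S' h') (s+\<delta>)) (thickE (h' ` S') (s+\<delta>)) (m' (s+\<delta>)) (e1' (s+\<delta>)) (e2' (s+\<delta>)) (e3' (s+\<delta>))"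
    by (rule fam_sys[OF f2]) (use s0 d in simp)
  have "(\<Sum>k<pm_dim m t. Fm p S' h' m' e2' e2 \<delta> t i k * pm_tr p S h m e2 s t k j)
     = (\<Sum>k<m t (1,3). Tm p (thickM (Gr S' h') (t+\<delta>)) (m' (t+\<delta>)) (e2' (t+\<delta>)) (e2 t) i k
           * Tm p (thickM (Gr S h) t) (m t) (e2 t) (e2 s) k j)"
    using s0 t0 st by (simp add: pm_dim_def pm_tr_def Tm_def gr_sp_def)
  also have "\<dots> = Tm p (thickM (Gr S' h') (t+\<delta>)) (m' (t+\<delta>)) (e2' (t+\<delta>)) (e2 s) i j"
    by (rule block_comp[OF sMs sMt sNt thickM_mono[OF st] cross_G[OF c] cross_D[OF c] cross_I[OF c] j' i'])
  also have "\<dots> = (\<Sum>k<m' (s+\<delta>) (1,3). Tm p (thickM (Gr S' h') (t+\<delta>)) (m' (t+\<delta>)) (e2' (t+\<delta>)) (e2' (s+\<delta>)) i k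
           * Tm p (thickM (Gr S' h') (s+\<delta>)) (m' (s+\<delta>)) (e2' (s+\<delta>)) (e2 s) k j)"
    by (rule block_comp[OF sMs sNs sNt cross_G[OF c] thickM_mono thickE_mono thickE_mono j' i', symmetric])
      (use st in simp_all)
  also have "\<dots> = (\<Sum>k<pm_dim m' (s + \<delta>). pm_tr p S' h' m' e2' (s + \<delta>) (t + \<delta>) i k * Fm p S' h' m' e2' e2 \<delta> s k j)"
    using s0 t0 st d by (simp add: pm_dim_def pm_tr_def Tm_def gr_sp_def)
  finally show "(\<Sum>k<pm_dim m t. Fm p S' h' m' e2' e2 \<delta> t i k * pm_tr p S h m e2 s t k j) =
       (\<Sum>k<pm_dim m' (s + \<delta>). pm_tr p S' h' m' e2' (s + \<delta>) (t + \<delta>) i k * Fm p S' h' m' e2' e2 \<delta> s k j)" .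
qed

lemma comp1:
  assumes f1: "is_decomp_family p S h m e1 e2 e3" and f2: "is_decomp_family p S' h' m' e1' e2' e3'"
    and d: "0 \<le> \<delta>" and c12: "\<forall>a\<in>Gr S h. \<exists>b\<in>Gr S' h'. dmax a b \<le> \<delta>"
    and c21: "\<forall>a\<in>Gr S' h'. \<exists>b\<in>Gr S h. dmax a b \<le> \<delta>"
  shows "\<forall>t. \<forall>i<pm_dim m (t + 2 * \<delta>). \<forall>j<pm_dim m t.
        (\<Sum>k<pm_dim m' (t + \<delta>). Fm p S h m e2 e2' \<delta> (t + \<delta>) i k * Fm p S' h' m' e2' e2 \<delta> t k j) = pm_tr p S h m e2 t (t + 2 * \<delta>) i j"
proof (intro allI impI)
  fix t i j assume i: "i < pm_dim m (t + 2 * \<delta>)" and j: "j < pm_dim m t"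
  have t0: "0 \<le> t" using j by (auto simp: pm_dim_def split: if_splits)
  have e: "t + \<delta> + \<delta> = t + 2 * \<delta>" by simp
  have i': "i < m (t + \<delta> + \<delta>) (1,3)" using i t0 d by (simp add: pm_dim_def e)
  have j': "j < m t (1,3)" using j t0 by (simp add: pm_dim_def)
  have sMt: "sysd p (thickE S t) (thickM (Gr S h) t) (thickE (h ` S) t) (m t) (e1 t) (e2 t) (e3 t)"
    by (rule fam_sys[OF f1 t0])
  have sNt: "sysd p (thickE S' (t+\<delta>)) (thickM (Gr S' h') (t+\<delta>)) (thickE (h' ` S') (t+\<delta>)) (m' (t+\<delta>)) (e1' (t+\<delta>)) (e2' (t+\<delta>)) (e3' (t+\<delta>))"
    by (rule fam_sys[OF f2]) (use t0 d in simp)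
  have sM2: "sysd p (thickE S (t+\<delta>+\<delta>)) (thickM (Gr S h) (t+\<delta>+\<delta>)) (thickE (h ` S) (t+\<delta>+\<delta>)) (m (t+\<delta>+\<delta>)) (e1 (t+\<delta>+\<delta>)) (e2 (t+\<delta>+\<delta>)) (e3 (t+\<delta>+\<delta>))"
    by (rule fam_sys[OF f1]) (use t0 d in simp)
  have "(\<Sum>k<pm_dim m' (t + \<delta>). Fm p S h m e2 e2' \<delta> (t + \<delta>) i k * Fm p S' h' m' e2' e2 \<delta> t k j)
     = (\<Sum>k<m' (t+\<delta>) (1,3). Tm p (thickM (Gr S h) (t+\<delta>+\<delta>)) (m (t+\<delta>+\<delta>)) (e2 (t+\<delta>+\<delta>)) (e2' (t+\<delta>)) i k
          * Tm p (thickM (Gr S' h') (t+\<delta>)) (m' (t+\<delta>)) (e2' (t+\<delta>)) (e2 t) k j)"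
    using t0 d by (simp add: pm_dim_def)
  also have "\<dots> = Tm p (thickM (Gr S h) (t+\<delta>+\<delta>)) (m (t+\<delta>+\<delta>)) (e2 (t+\<delta>+\<delta>)) (e2 t) i j"
    by (rule block_comp[OF sMt sNt sM2 cross_G[OF c12] cross_G[OF c21] cross_D[OF c21] cross_I[OF c21] j' i'])
  also have "\<dots> = pm_tr p S h m e2 t (t + 2 * \<delta>) i j"
    using t0 d unfolding e by (simp add: pm_tr_def Tm_def gr_sp_def)
  finally show "(\<Sum>k<pm_dim m' (t + \<delta>). Fm p S h m e2 e2' \<delta> (t + \<delta>) i k * Fm p S' h' m' e2' e2 \<delta> t k j) = pm_tr p S h m e2 t (t + 2 * \<delta>) i j" .
qed

lemma interleaved:
  assumes f1: "is_decomp_family p S h m e1 e2 e3" and f2: "is_decomp_family p S' h' m' e1' e2' e3'"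
    and d: "0 \<le> \<delta>" and c12: "\<forall>a\<in>Gr S h. \<exists>b\<in>Gr S' h'. dmax a b \<le> \<delta>"
    and c21: "\<forall>a\<in>Gr S' h'. \<exists>b\<in>Gr S h. dmax a b \<le> \<delta>"
  shows "pm_interleaved (pm_dim m) (pm_tr p S h m e2) (pm_dim m') (pm_tr p S' h' m' e2') \<delta>"
  unfolding pm_interleaved_def
  using morph[OF f1 f2 d c12] morph[OF f2 f1 d c21] comp1[OF f1 f2 d c12 c21] comp1[OF f2 f1 d c21 c12]
  by blast




lemma dmax_commute: "dmax a b = dmax b a"
  by (simp add: dmax_def dist_commute)

lemma dmax_nonneg: "0 \<le> dmax a b"
  by (simp add: dmax_def le_max_iff_disj)

lemma INF_dmax_nonneg: "0 \<le> (INF b\<in>B. ereal (dmax a b))"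
  by (rule INF_greatest) (simp add: dmax_nonneg)

lemma hd_nonneg: "0 \<le> hausdorff_dmax A B"
proof (cases "A = {} \<and> B = {}")
  case True then show ?thesis by (simp add: hausdorff_dmax_def)
next
  case False
  then consider a where "a \<in> A" | b where "b \<in> B" by blast
  then show ?thesis
  proof cases
    case 1
    have "0 \<le> (SUP a\<in>A. INF b\<in>B. ereal (dmax a b))"
      by (rule SUP_upper2[OF 1]) (rule INF_dmax_nonneg)
    then show ?thesis using False by (simp add: hausdorff_dmax_def le_max_iff_disj)
  next
    case 2
    have "0 \<le> (SUP b\<in>B. INF a\<in>A. ereal (dmax a b))"
      by (rule SUP_upper2[OF 2]) (rule INF_greatest, simp add: dmax_nonneg)
    then show ?thesis using False by (simp add: hausdorff_dmax_def le_max_iff_disj)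
  qed
qed

lemma hd_cover:
  assumes "hausdorff_dmax A B < ereal r"
  shows "(\<forall>a\<in>A. \<exists>b\<in>B. dmax a b \<le> r) \<and> (\<forall>b\<in>B. \<exists>a\<in>A. dmax b a \<le> r)"
proof (cases "A = {} \<and> B = {}")
  case True then show ?thesis by simp
next
  case False
  then have X: "(SUP a\<in>A. INF b\<in>B. ereal (dmax a b)) < ereal r"
    and Y: "(SUP b\<in>B. INF a\<in>A. ereal (dmax a b)) < ereal r"
  proof -
    have "hausdorff_dmax A B = max (SUP a\<in>A. INF b\<in>B. ereal (dmax a b)) (SUP b\<in>B. INF a\<in>A. ereal (dmax a b))"
      using False unfolding hausdorff_dmax_def by (simp only: if_False)
    then show "(SUP a\<in>A. INF b\<in>B. ereal (dmax a b)) < ereal r" "(SUP b\<in>B. INF a\<in>A. ereal (dmax a b)) < ereal r"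
      using assms by simp_all
  qed
  have 1: "\<exists>b\<in>B. dmax a b \<le> r" if a: "a \<in> A" for a
  proof -
    have "(INF b\<in>B. ereal (dmax a b)) < ereal r"
      using X SUP_upper[OF a, of "\<lambda>a. INF b\<in>B. ereal (dmax a b)"] by (meson order.strict_trans1)
    then obtain b where "b \<in> B" "ereal (dmax a b) < ereal r" by (auto simp: INF_less_iff)
    then show ?thesis using less_imp_le by auto
  qed
  have 2: "\<exists>a\<in>A. dmax b a \<le> r" if b: "b \<in> B" for b
  proof -
    have "(INF a\<in>A. ereal (dmax a b)) < ereal r"
      using Y SUP_upper[OF b, of "\<lambda>b. INF a\<in>A. ereal (dmax a b)"] by (meson order.strict_trans1)
    then obtain a where "a \<in> A" "ereal (dmax a b) < ereal r" by (auto simp: INF_less_iff)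
    then show ?thesis using less_imp_le by (auto simp: dmax_commute)
  qed
  show ?thesis using 1 2 by blast
qed

theorem mainTheorem7:
  fixes p :: nat
    and S S' :: "(real ^ 'n) set"
    and h h' :: "real ^ 'n \<Rightarrow> real ^ 'n"
    and m m' :: "real \<Rightarrow> nat \<times> nat \<Rightarrow> nat"
    and e1 e3 e1' e3' :: "real \<Rightarrow> (nat \<times> nat) \<times> nat \<Rightarrow> (real ^ 'n, 'k::field) kchain"
    and e2 e2' :: "real \<Rightarrow> (nat \<times> nat) \<times> nat \<Rightarrow> ((real ^ 'n) \<times> (real ^ 'n), 'k) kchain"
  assumes "finite S" and "finite S'"
    and "is_decomp_family p S h m e1 e2 e3"
    and "is_decomp_family p S' h' m' e1' e2' e3'"
  shows "interleaving_dist (pm_dim m) (pm_tr p S h m e2) (pm_dim m') (pm_tr p S' h' m' e2')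
           \<le> hausdorff_dmax (Gr S h) (Gr S' h')"
  unfolding interleaving_dist_def
proof (rule dense_ge)
  fix x assume x: "hausdorff_dmax (Gr S h) (Gr S' h') < x"
  have H0: "0 \<le> hausdorff_dmax (Gr S h) (Gr S' h')" by (rule hd_nonneg)
  show "Inf {ereal \<delta> |\<delta>. 0 \<le> \<delta> \<and> pm_interleaved (pm_dim m) (pm_tr p S h m e2) (pm_dim m') (pm_tr p S' h' m' e2') \<delta>} \<le> x"
  proof (cases x)
    case (real r)
    have r0: "0 \<le> r" using H0 x real by (metis ereal_less_eq(5) order.strict_trans1 less_imp_le)
    have cv: "(\<forall>a\<in>Gr S h. \<exists>b\<in>Gr S' h'. dmax a b \<le> r) \<and> (\<forall>b\<in>Gr S' h'. \<exists>a\<in>Gr S h. dmax b a \<le> r)"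
      using hd_cover x real by blast
    have "pm_interleaved (pm_dim m) (pm_tr p S h m e2) (pm_dim m') (pm_tr p S' h' m' e2') r"
      using interleaved[OF assms(3,4) r0] cv by blast
    then have "ereal r \<in> {ereal \<delta> |\<delta>. 0 \<le> \<delta> \<and> pm_interleaved (pm_dim m) (pm_tr p S h m e2) (pm_dim m') (pm_tr p S' h' m' e2') \<delta>}"
      using r0 by blast
    then show ?thesis using real by (auto intro: Inf_lower)
  next
    case PInf then show ?thesis by simp
  next
    case MInf then show ?thesis using x by simp
  qed
qed


end
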